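(* Let $g_1,g_2$ be independent exponential random variables with means $\varepsilon_1,\varepsilon_2>0$. Fix rates $R_d>R_s\ge 0$ and $\rho\ge 0$, let $SNR=P_s/\sigma^2$ and $INR=P_d/\sigma^2=SNR^\rho$. Define the events $$E_o^{\mathrm{MF}}=\Big\{\tfrac12\log_2\!\Big(\tfrac12+SNR\tfrac{g_1g_2}{g_1+g_2}\Big)<R_d\Big\},\quad E_o^{\mathrm{cs}}=\Big\{\tfrac12\log_2\!\big(1+\min\{g_1,g_2\}SNR\big)<R_d\Big\},$$ $$E_l=\Big\{\tfrac12\log_2\!\Big(1+\tfrac{g_1\,SNR}{g_2\,INR+1}\Big)>R_d-R_s\Big\},$$ and the total outage probabilities $p_t^{\mathrm{MF}}=\Pr(E_o^{\mathrm{MF}}\cup E_l)$ and $p_t^{\mathrm{cs}}=\Pr(E_o^{\mathrm{cs}}\cup E_l)$. Then $$\limsup_{SNR\to\infty}\frac{-\log p_t^{\mathrm{MF}}}{\log SNR}=\limsup_{SNR\to\infty}\frac{-\log p_t^{\mathrm{cs}}}{\log SNR}=\begin{cases}0,&\rho\le 1,\\ \rho-1,&1<\rho\le 2,\\ 1,&\rho>2.\end{cases}$$ That is, the modulo-and-forward scheme achieves the full generalized secure diversity gain (the one given by the cut-set bound).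
   Context: Untrusted relay channel without channel state information at the transmitter: $h_i\sim\mathcal{CN}(0,\varepsilon_i)$, $g_i=|h_i|^2$ ($g_1$: source–relay, $g_2$: destination–relay and relay–destination). $P_s$ is the source/relay power, $P_d$ the destination's artificial-noise power, $\sigma^2$ the noise variance. $R_d$ is the total (confidential plus randomization) transmission rate and $R_s$ the confidential rate. $E_o^{\mathrm{MF}}$ is connection outage of the modulo-and-forward scheme, $E_o^{\mathrm{cs}}$ is connection outage for the cut-set upper bound on end-to-end capacity (valid for any relay processing), and $E_l$ is secrecy outage at the untrusted relay. The generalized secure diversity gain is $\limsup_{SNR\to\infty}(-\log p_t)/\log SNR$ with $INR=SNR^\rho$. *)

theory Defs
  imports "HOL-Probability.Probability"
begin

definition E_o_MF :: "real \<Rightarrow> real \<Rightarrow> real \<Rightarrow> real \<Rightarrow> bool" where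
  "E_o_MF Rd snr g1 g2 \<longleftrightarrow> (1/2) * log 2 (1/2 + snr * (g1 * g2 / (g1 + g2))) < Rd"

definition E_o_cs :: "real \<Rightarrow> real \<Rightarrow> real \<Rightarrow> real \<Rightarrow> bool" where
  "E_o_cs Rd snr g1 g2 \<longleftrightarrow> (1/2) * log 2 (1 + min g1 g2 * snr) < Rd"

definition E_l :: "real \<Rightarrow> real \<Rightarrow> real \<Rightarrow> real \<Rightarrow> real \<Rightarrow> real \<Rightarrow> bool" where
  "E_l Rd Rs snr inr g1 g2 \<longleftrightarrow> (1/2) * log 2 (1 + g1 * snr / (g2 * inr + 1)) > Rd - Rs"

definition gsdg :: "real \<Rightarrow> real" where
  "gsdg \<rho> = (if \<rho> \<le> 1 then 0 else if \<rho> \<le> 2 then \<rho> - 1 else 1)"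

end

theory Submission
  imports Defs "HOL-Real_Asymp.Real_Asymp"
begin

lemma generic_limsup:
  fixes p :: "real \<Rightarrow> real" and d cl C :: real
  assumes d: "d \<ge> 0" and cl: "cl > 0" and C: "C > 0"
  and ev: "eventually (\<lambda>s. cl * s powr (-d) \<le> p s \<and> p s \<le> C * s powr (-d) * ln s) at_top"
  shows "Limsup at_top (\<lambda>s. ereal (- ln (p s) / ln s)) = ereal d"
proof -
  have ev3: "eventually (\<lambda>s::real. exp 1 \<le> s) at_top" by (rule eventually_ge_at_top)
  have key: "eventually (\<lambda>s. d - ln C / ln s - ln (ln s) / ln s \<le> - ln (p s) / ln s
        \<and> - ln (p s) / ln s \<le> d - ln cl / ln s) at_top"
    using ev ev3
  proof eventually_elim
    case (elim s)
    have s0: "s > 0" using elim by (smt (verit) exp_gt_zero)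
    have ls: "ln s \<ge> 1" using elim s0 by (metis ln_exp ln_le_cancel_iff exp_gt_zero)
    have pp: "cl * s powr (-d) > 0" using cl s0 by simp
    hence p0: "p s > 0" using elim by linarith
    have l1: "ln (cl * s powr (-d)) = ln cl - d * ln s" using cl s0 by (simp add: ln_mult ln_powr)
    have s1: "s \<noteq> 1" using ls by auto
    have l2: "ln (C * s powr (-d) * ln s) = ln C - d * ln s + ln (ln s)" using C s0 ls s1
      by (simp add: ln_mult ln_powr)
    have a1: "ln cl - d * ln s \<le> ln (p s)" using l1 elim pp p0 by (metis ln_le_cancel_iff)
    have a2: "ln (p s) \<le> ln C - d * ln s + ln (ln s)" using l2 elim pp p0 C ls s0
      by (metis ln_le_cancel_iff mult_pos_pos order.strict_trans2 zero_less_one powr_gt_zero)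
    have lsp: "ln s > 0" using ls by simp
    have "- ln (p s) / ln s \<le> (d * ln s - ln cl) / ln s"
      using a1 lsp by (intro divide_right_mono) auto
    also have "\<dots> = d - ln cl / ln s" using lsp by (simp add: field_simps)
    finally have u: "- ln (p s) / ln s \<le> d - ln cl / ln s" .
    have "d - ln C / ln s - ln (ln s) / ln s = (d * ln s - ln C - ln (ln s)) / ln s"
      using lsp by (simp add: field_simps)
    also have "\<dots> \<le> - ln (p s) / ln s" using a2 lsp by (intro divide_right_mono) auto
    finally show ?case using u by simp
  qed
  have lim: "((\<lambda>s. - ln (p s) / ln s) \<longlongrightarrow> d) at_top"
  proof (rule tendsto_sandwich)
    show "((\<lambda>s. d - ln C / ln s - ln (ln s) / ln s) \<longlongrightarrow> d) at_top" by real_asymp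
    show "((\<lambda>s. d - ln cl / ln s) \<longlongrightarrow> d) at_top" by real_asymp
    show "eventually (\<lambda>s. d - ln C / ln s - ln (ln s) / ln s \<le> - ln (p s) / ln s) at_top"
      using key by (rule eventually_mono) auto
    show "eventually (\<lambda>s. - ln (p s) / ln s \<le> d - ln cl / ln s) at_top"
      using key by (rule eventually_mono) auto
  qed
  show ?thesis
    by (rule lim_imp_Limsup) (use lim in \<open>auto intro: tendsto_ereal\<close>)
qed


lemma exp_h1: "1 - exp (- (y::real)) \<le> y"
  using exp_ge_add_one_self[of "-y"] by simp

lemma exp_h2: assumes "0 \<le> (y::real)" shows "y / (1 + y) \<le> 1 - exp (- y)"
proof -
  have "1 + y \<le> exp y" by (rule exp_ge_add_one_self)
  hence "exp (-y) \<le> 1 / (1 + y)" using assms by (simp add: exp_minus field_simps)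
  moreover have "1 - 1 / (1 + y) = y / (1 + y)" using assms by (simp add: field_simps)
  ultimately show ?thesis by linarith
qed

lemma El_iff:
  assumes "s > 0" "g1 \<ge> 0" "g2 \<ge> 0" "ir \<ge> 0"
  shows "E_l Rd Rs s ir g1 g2 \<longleftrightarrow> (2 powr (2*(Rd-Rs)) - 1) * (g2*ir+1) < g1* s"
proof -
  have pos: "g2*ir+1 > 0" using assms by (simp add: add_nonneg_pos)
  have x0: "0 < 1 + g1 * s / (g2 * ir + 1)" using assms pos by (simp add: add_pos_nonneg)
  have "E_l Rd Rs s ir g1 g2 \<longleftrightarrow> 2*(Rd - Rs) < log 2 (1 + g1 * s / (g2 * ir + 1))"
    unfolding E_l_def by auto
  also have "\<dots> \<longleftrightarrow> 2 powr (2*(Rd-Rs)) < 1 + g1 * s / (g2 * ir + 1)"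
    using x0 by (simp add: less_log_iff)
  also have "\<dots> \<longleftrightarrow> (2 powr (2*(Rd-Rs)) - 1) * (g2*ir+1) < g1* s"
    using pos by (simp add: field_simps)
  finally show ?thesis .
qed

lemma cs_iff:
  assumes "s > 0" "g1 \<ge> 0" "g2 \<ge> 0"
  shows "E_o_cs Rd s g1 g2 \<longleftrightarrow> min g1 g2 * s < 2 powr (2*Rd) - 1"
proof -
  have x0: "0 < 1 + min g1 g2 * s" using assms by (simp add: add_pos_nonneg)
  have "E_o_cs Rd s g1 g2 \<longleftrightarrow> log 2 (1 + min g1 g2 * s) < 2*Rd"
    unfolding E_o_cs_def by auto
  also have "\<dots> \<longleftrightarrow> 1 + min g1 g2 * s < 2 powr (2*Rd)" using x0 by (simp add: log_less_iff)
  finally show ?thesis by linarith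
qed

lemma MF_iff:
  assumes "s > 0" "g1 \<ge> 0" "g2 \<ge> 0"
  shows "E_o_MF Rd s g1 g2 \<longleftrightarrow> s * (g1 * g2 / (g1 + g2)) < 2 powr (2*Rd) - 1/2"
proof -
  have x0: "0 < 1/2 + s * (g1 * g2 / (g1 + g2))" using assms by (simp add: add_pos_nonneg)
  have "E_o_MF Rd s g1 g2 \<longleftrightarrow> log 2 (1/2 + s * (g1 * g2 / (g1 + g2))) < 2*Rd"
    unfolding E_o_MF_def by auto
  also have "\<dots> \<longleftrightarrow> 1/2 + s * (g1 * g2 / (g1 + g2)) < 2 powr (2*Rd)" using x0 by (simp add: log_less_iff)
  finally show ?thesis by linarith
qed

lemma hm_le: assumes "g1 \<ge> 0" "g2 \<ge> 0" shows "g1 * g2 / (g1 + g2) \<le> (g1::real)"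
proof (cases "g1 + g2 = 0")
  case True thus ?thesis using assms by simp
next
  case False
  hence "g1 + g2 > 0" using assms by simp
  thus ?thesis using assms by (simp add: divide_le_eq mult_left_mono)
qed

lemma hm_ge: assumes "g1 \<ge> 0" "g2 \<ge> 0" shows "min g1 g2 \<le> 2 * (g1 * g2 / (g1 + g2::real))"
proof (cases "g1 + g2 = 0")
  case True thus ?thesis using assms by simp
next
  case False
  hence p: "g1 + g2 > 0" using assms by simp
  have a: "min g1 g2 * g1 \<le> g2 * g1" using assms by (intro mult_right_mono) auto
  have b: "min g1 g2 * g2 \<le> g1 * g2" using assms by (intro mult_right_mono) auto
  have "min g1 g2 * (g1 + g2) \<le> 2 * (g1 * g2)" using a b by (simp add: algebra_simps)
  thus ?thesis using p by (simp add: le_divide_eq mult.commute)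
qed

lemma core_bounds:
  fixes M :: "'a measure" and X1 X2 :: "'a \<Rightarrow> real" and Q :: "real \<Rightarrow> real \<Rightarrow> real \<Rightarrow> bool"
    and \<epsilon>1 \<epsilon>2 Rd Rs \<rho> ka kb :: real
  assumes P: "prob_space M" and e1: "\<epsilon>1 > 0" and e2: "\<epsilon>2 > 0"
    and D1: "distributed M lborel X1 (exponential_density (1 / \<epsilon>1))"
    and D2: "distributed M lborel X2 (exponential_density (1 / \<epsilon>2))"
    and I: "prob_space.indep_var M borel X1 borel X2"
    and R: "Rd > Rs" and Rs: "Rs \<ge> 0" and rho: "\<rho> \<ge> 0"
    and ka: "ka > 0" and kb: "kb > 0"
    and O1: "\<And>s g1 g2. s > 0 \<Longrightarrow> g1 \<ge> 0 \<Longrightarrow> g2 \<ge> 0 \<Longrightarrow> g1 < ka / s \<Longrightarrow> Q s g1 g2"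
    and O2: "\<And>s g1 g2. s > 0 \<Longrightarrow> g1 \<ge> 0 \<Longrightarrow> g2 \<ge> 0 \<Longrightarrow> Q s g1 g2 \<Longrightarrow> min g1 g2 < kb / s"
    and Ms: "\<And>s. {\<omega> \<in> space M. Q s (X1 \<omega>) (X2 \<omega>) \<or> E_l Rd Rs s (s powr \<rho>) (X1 \<omega>) (X2 \<omega>)} \<in> sets M"
  defines "a \<equiv> 2 powr (2*(Rd-Rs)) - 1"
  defines "p \<equiv> \<lambda>s. measure M {\<omega> \<in> space M. Q s (X1 \<omega>) (X2 \<omega>) \<or> E_l Rd Rs s (s powr \<rho>) (X1 \<omega>) (X2 \<omega>)}"
  shows "a > 0"
    and "\<And>s. s > 0 \<Longrightarrow> 1 - exp (- (ka / (2* s)) / \<epsilon>1) \<le> p s"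
    and "\<And>s. s \<ge> 1 \<Longrightarrow> exp (- (2*a) / \<epsilon>1) * (1 - exp (- (s powr (1-\<rho>)) / \<epsilon>2)) \<le> p s"
    and "\<And>s u. s \<ge> 1 \<Longrightarrow> u \<ge> 0 \<Longrightarrow> p s \<le> kb / s / \<epsilon>1 + kb / s / \<epsilon>2 + u / \<epsilon>2
             + exp (- (a * u * s powr (\<rho> - 1)) / \<epsilon>1)"
    and "\<And>s. p s \<le> 1"
proof -
  interpret prob_space M by (rule P)
  have m1[measurable]: "X1 \<in> borel_measurable M" using distributed_measurable[OF D1] by simp
  have m2[measurable]: "X2 \<in> borel_measurable M" using distributed_measurable[OF D2] by simp
  have le1: "prob {\<omega>\<in>space M. X1 \<omega> \<le> x} = 1 - exp (- x / \<epsilon>1)" if "0 \<le> x" for x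
    using exponential_distributedD_le[OF D1 that] e1 by simp
  have le2: "prob {\<omega>\<in>space M. X2 \<omega> \<le> x} = 1 - exp (- x / \<epsilon>2)" if "0 \<le> x" for x
    using exponential_distributedD_le[OF D2 that] e2 by simp
  have gt1: "prob {\<omega>\<in>space M. x < X1 \<omega>} = exp (- x / \<epsilon>1)" if "0 \<le> x" for x
    using exponential_distributedD_gt[OF D1 that] e1 by simp
  have le1': "prob {\<omega>\<in>space M. X1 \<omega> \<le> x} \<le> x / \<epsilon>1" if "0 \<le> x" for x
    using le1[OF that] exp_h1[of "x / \<epsilon>1"] by simp
  have le2': "prob {\<omega>\<in>space M. X2 \<omega> \<le> x} \<le> x / \<epsilon>2" if "0 \<le> x" for x
    using le2[OF that] exp_h1[of "x / \<epsilon>2"] by simp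
  have subadd: "prob (A \<union> B) \<le> prob A + prob B" if "A \<in> sets M" "B \<in> sets M" for A B
    using that by (intro measure_subadditive) auto
  define N where "N = {\<omega>\<in>space M. X1 \<omega> < 0 \<or> X2 \<omega> < 0}"
  have N[measurable]: "N \<in> sets M" unfolding N_def by measurable
  have N0: "prob N = 0"
  proof -
    have "prob N \<le> prob ({\<omega>\<in>space M. X1 \<omega> \<le> 0} \<union> {\<omega>\<in>space M. X2 \<omega> \<le> 0})"
      by (rule finite_measure_mono) (auto simp: N_def)
    also have "\<dots> \<le> prob {\<omega>\<in>space M. X1 \<omega> \<le> 0} + prob {\<omega>\<in>space M. X2 \<omega> \<le> 0}"
      by (rule subadd) auto
    also have "\<dots> = 0" using le1[of 0] le2[of 0] by simp
    finally show ?thesis by (simp add: measure_nonneg antisym)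
  qed
  have mono: "prob A \<le> prob B" if "A \<subseteq> B \<union> N" "B \<in> sets M" for A B
  proof -
    have "prob A \<le> prob (B \<union> N)" using that by (intro finite_measure_mono) auto
    also have "\<dots> \<le> prob B + prob N" using that by (intro subadd) auto
    finally show ?thesis using N0 by simp
  qed
  show apos: "a > 0" unfolding a_def using R gr_one_powr[of 2 "2*(Rd-Rs)"] by simp
  define S where "S = (\<lambda>s. {\<omega> \<in> space M. Q s (X1 \<omega>) (X2 \<omega>) \<or> E_l Rd Rs s (s powr \<rho>) (X1 \<omega>) (X2 \<omega>)})"
  have pS: "p s = prob (S s)" for s unfolding p_def S_def ..
  have MS: "S s \<in> sets M" for s unfolding S_def by (rule Ms)
  show "p s \<le> 1" for s unfolding pS by simp
  show "1 - exp (- (ka / (2* s)) / \<epsilon>1) \<le> p s" if s: "s > 0" for s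
  proof -
    have "{\<omega>\<in>space M. X1 \<omega> \<le> ka / (2* s)} \<subseteq> S s \<union> N"
    proof
      fix \<omega> assume w: "\<omega> \<in> {\<omega>\<in>space M. X1 \<omega> \<le> ka / (2* s)}"
      show "\<omega> \<in> S s \<union> N"
      proof (cases "\<omega> \<in> N")
        case False
        hence nn: "X1 \<omega> \<ge> 0" "X2 \<omega> \<ge> 0" using w by (auto simp: N_def)
        have "ka / (2* s) < ka / s" using s ka by (simp add: field_simps)
        hence "X1 \<omega> < ka / s" using w by simp
        hence "Q s (X1 \<omega>) (X2 \<omega>)" using O1 s nn by blast
        thus ?thesis using w by (simp add: S_def)
      qed simp
    qed
    hence "prob {\<omega>\<in>space M. X1 \<omega> \<le> ka / (2* s)} \<le> p s" unfolding pS by (rule mono) (rule MS)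
    thus ?thesis using le1[of "ka / (2* s)"] s ka by simp
  qed
  show "exp (- (2*a) / \<epsilon>1) * (1 - exp (- (s powr (1-\<rho>)) / \<epsilon>2)) \<le> p s" if s: "s \<ge> 1" for s
  proof -
    define t where "t = s powr (1-\<rho>)"
    have t0: "t \<ge> 0" unfolding t_def by simp
    define T where "T = {\<omega>\<in>space M. 2*a < X1 \<omega> \<and> X2 \<omega> \<le> t}"
    have "T \<subseteq> S s \<union> N"
    proof
      fix \<omega> assume w: "\<omega> \<in> T"
      show "\<omega> \<in> S s \<union> N"
      proof (cases "\<omega> \<in> N")
        case False
        hence nn: "X1 \<omega> \<ge> 0" "X2 \<omega> \<ge> 0" using w by (auto simp: N_def T_def)
        have s0: "s > 0" using s by simp
        have ts: "t * s powr \<rho> = s" unfolding t_def using s0 by (simp add: powr_add[symmetric])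
        have "X2 \<omega> * s powr \<rho> \<le> t * s powr \<rho>" using w by (intro mult_right_mono) (auto simp: T_def)
        hence b1: "X2 \<omega> * s powr \<rho> \<le> s" using ts by simp
        have "a * (X2 \<omega> * s powr \<rho> + 1) \<le> a * (s + 1)" using b1 apos by simp
        also have "\<dots> \<le> (2*a) * s" using s apos by (simp add: algebra_simps)
        also have "\<dots> < X1 \<omega> * s" using w s0 by (auto simp: T_def)
        finally have "a * (X2 \<omega> * s powr \<rho> + 1) < X1 \<omega> * s" .
        hence "E_l Rd Rs s (s powr \<rho>) (X1 \<omega>) (X2 \<omega>)"
          using El_iff[of s "X1 \<omega>" "X2 \<omega>" "s powr \<rho>" Rd Rs] s0 nn unfolding a_def by simp
        thus ?thesis using w by (simp add: S_def T_def)
      qed simp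
    qed
    hence "prob T \<le> p s" unfolding pS by (rule mono) (rule MS)
    moreover have "prob T = prob {\<omega>\<in>space M. 2*a < X1 \<omega>} * prob {\<omega>\<in>space M. X2 \<omega> \<le> t}"
    proof -
      have "prob ((\<lambda>x. (X1 x, X2 x)) -` ({2*a<..} \<times> {..t}) \<inter> space M) =
        prob (X1 -` {2*a<..} \<inter> space M) * prob (X2 -` {..t} \<inter> space M)"
        by (rule indep_varD[OF I]) auto
      moreover have "(\<lambda>x. (X1 x, X2 x)) -` ({2*a<..} \<times> {..t}) \<inter> space M = T"
        by (auto simp: T_def)
      moreover have "X1 -` {2*a<..} \<inter> space M = {\<omega>\<in>space M. 2*a < X1 \<omega>}" by auto
      moreover have "X2 -` {..t} \<inter> space M = {\<omega>\<in>space M. X2 \<omega> \<le> t}" by auto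
      ultimately show ?thesis by simp
    qed
    ultimately show ?thesis using gt1[of "2*a"] le2[OF t0] apos by (simp add: t_def)
  qed
  show "p s \<le> kb / s / \<epsilon>1 + kb / s / \<epsilon>2 + u / \<epsilon>2 + exp (- (a * u * s powr (\<rho> - 1)) / \<epsilon>1)"
    if s: "s \<ge> 1" and u: "u \<ge> 0" for s u
  proof -
    have s0: "s > 0" using s by simp
    define v where "v = a * u * s powr (\<rho> - 1)"
    have v0: "v \<ge> 0" unfolding v_def using apos u by simp
    define B1 where "B1 = {\<omega>\<in>space M. X1 \<omega> \<le> kb / s}"
    define B2 where "B2 = {\<omega>\<in>space M. X2 \<omega> \<le> kb / s}"
    define B3 where "B3 = {\<omega>\<in>space M. X2 \<omega> \<le> u}"
    define B4 where "B4 = {\<omega>\<in>space M. v < X1 \<omega>}"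
    have [measurable]: "B1 \<in> sets M" "B2 \<in> sets M" "B3 \<in> sets M" "B4 \<in> sets M"
      unfolding B1_def B2_def B3_def B4_def by measurable
    have "S s \<subseteq> (B1 \<union> B2 \<union> B3 \<union> B4) \<union> N"
    proof
      fix \<omega> assume w: "\<omega> \<in> S s"
      show "\<omega> \<in> (B1 \<union> B2 \<union> B3 \<union> B4) \<union> N"
      proof (cases "\<omega> \<in> N")
        case False
        hence nn: "X1 \<omega> \<ge> 0" "X2 \<omega> \<ge> 0" and sp: "\<omega> \<in> space M" using w by (auto simp: N_def S_def)
        have "Q s (X1 \<omega>) (X2 \<omega>) \<or> E_l Rd Rs s (s powr \<rho>) (X1 \<omega>) (X2 \<omega>)" using w by (simp add: S_def)
        thus ?thesis
        proof
          assume "Q s (X1 \<omega>) (X2 \<omega>)"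
          hence "min (X1 \<omega>) (X2 \<omega>) < kb / s" using O2 s0 nn by blast
          thus ?thesis using sp by (auto simp: B1_def B2_def min_def split: if_splits)
        next
          assume "E_l Rd Rs s (s powr \<rho>) (X1 \<omega>) (X2 \<omega>)"
          hence el: "a * (X2 \<omega> * s powr \<rho> + 1) < X1 \<omega> * s"
            using El_iff[of s "X1 \<omega>" "X2 \<omega>" "s powr \<rho>" Rd Rs] s0 nn unfolding a_def by simp
          show ?thesis
          proof (cases "X2 \<omega> \<le> u")
            case True thus ?thesis using sp by (auto simp: B3_def)
          next
            case False
            have sp1: "s powr \<rho> = s powr (\<rho> - 1) * s" using s0 by (simp add: powr_diff)
            have "v * s = a * u * s powr \<rho>" unfolding v_def sp1 by simp
            also have "\<dots> \<le> a * X2 \<omega> * s powr \<rho>" using False apos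
              by (intro mult_right_mono mult_left_mono) auto
            also have "\<dots> < X1 \<omega> * s" using el apos by (simp add: algebra_simps)
            finally have "v < X1 \<omega>" using s0 by simp
            thus ?thesis using sp by (auto simp: B4_def)
          qed
        qed
      qed simp
    qed
    hence "p s \<le> prob (B1 \<union> B2 \<union> B3 \<union> B4)" unfolding pS by (rule mono) measurable
    also have "\<dots> \<le> prob B1 + prob B2 + prob B3 + prob B4"
      by (smt (verit) sets.Un subadd \<open>B1 \<in> sets M\<close> \<open>B2 \<in> sets M\<close>
          \<open>B3 \<in> sets M\<close> \<open>B4 \<in> sets M\<close>)
    also have "\<dots> \<le> kb / s / \<epsilon>1 + kb / s / \<epsilon>2 + u / \<epsilon>2 + exp (- v / \<epsilon>1)"
      using le1'[of "kb/s"] le2'[of "kb/s"] le2'[OF u] gt1[OF v0] s0 kb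
      unfolding B1_def B2_def B3_def B4_def by simp
    finally show ?thesis unfolding v_def .
  qed
qed

lemma core_limsup:
  fixes M :: "'a measure" and X1 X2 :: "'a \<Rightarrow> real" and Q :: "real \<Rightarrow> real \<Rightarrow> real \<Rightarrow> bool"
    and \<epsilon>1 \<epsilon>2 Rd Rs \<rho> ka kb :: real
  assumes P: "prob_space M" and e1: "\<epsilon>1 > 0" and e2: "\<epsilon>2 > 0"
    and D1: "distributed M lborel X1 (exponential_density (1 / \<epsilon>1))"
    and D2: "distributed M lborel X2 (exponential_density (1 / \<epsilon>2))"
    and I: "prob_space.indep_var M borel X1 borel X2"
    and R: "Rd > Rs" and Rs: "Rs \<ge> 0" and rho: "\<rho> \<ge> 0"
    and ka: "ka > 0" and kb: "kb > 0"
    and O1: "\<And>s g1 g2. s > 0 \<Longrightarrow> g1 \<ge> 0 \<Longrightarrow> g2 \<ge> 0 \<Longrightarrow> g1 < ka / s \<Longrightarrow> Q s g1 g2"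
    and O2: "\<And>s g1 g2. s > 0 \<Longrightarrow> g1 \<ge> 0 \<Longrightarrow> g2 \<ge> 0 \<Longrightarrow> Q s g1 g2 \<Longrightarrow> min g1 g2 < kb / s"
    and Ms: "\<And>s. {\<omega> \<in> space M. Q s (X1 \<omega>) (X2 \<omega>) \<or> E_l Rd Rs s (s powr \<rho>) (X1 \<omega>) (X2 \<omega>)} \<in> sets M"
  shows "Limsup at_top (\<lambda>s. ereal (- ln (measure M {\<omega> \<in> space M. Q s (X1 \<omega>) (X2 \<omega>) \<or> E_l Rd Rs s (s powr \<rho>) (X1 \<omega>) (X2 \<omega>)}) / ln s)) = ereal (gsdg \<rho>)"
proof -
  define a where "a = 2 powr (2*(Rd-Rs)) - 1"
  define p where "p s = measure M {\<omega> \<in> space M. Q s (X1 \<omega>) (X2 \<omega>) \<or> E_l Rd Rs s (s powr \<rho>) (X1 \<omega>) (X2 \<omega>)}" for s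
  note B = core_bounds[OF P e1 e2 D1 D2 I R Rs rho ka kb O1 O2 Ms, folded a_def p_def]
  have apos: "a > 0" by (rule B(1))
  have LB1: "\<And>s. s > 0 \<Longrightarrow> 1 - exp (- (ka / (2 * s)) / \<epsilon>1) \<le> p s" by (rule B(2))
  have LB2: "\<And>s. s \<ge> 1 \<Longrightarrow> exp (- (2*a) / \<epsilon>1) * (1 - exp (- (s powr (1-\<rho>)) / \<epsilon>2)) \<le> p s"
    by (rule B(3))
  have UB: "\<And>s u. s \<ge> 1 \<Longrightarrow> u \<ge> 0 \<Longrightarrow> p s \<le> kb / s / \<epsilon>1 + kb / s / \<epsilon>2 + u / \<epsilon>2
             + exp (- (a * u * s powr (\<rho> - 1)) / \<epsilon>1)" by (rule B(4))
  have U1: "\<And>s. p s \<le> 1" by (rule B(5))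
  have ev: "eventually (\<lambda>s::real. exp 1 \<le> s) at_top" by (rule eventually_ge_at_top)
  have lns: "ln s \<ge> 1" "s \<ge> 1" "s > 0" if "exp 1 \<le> s" for s :: real
  proof -
    show s0: "s > 0" using that by (smt (verit) exp_gt_zero)
    show "ln s \<ge> 1" using that s0 by (metis ln_exp ln_le_cancel_iff exp_gt_zero)
    show "s \<ge> 1" using that by (smt (verit) one_le_exp_iff)
  qed
  have upper: "eventually (\<lambda>s. p s \<le> (kb/\<epsilon>1 + kb/\<epsilon>2 + (\<rho>*\<epsilon>1/a)/\<epsilon>2 + 1) * s powr (-d) * ln s) at_top"
    if r1: "1 < \<rho>" and d0: "0 \<le> d" and d1: "d \<le> 1" and dr: "d \<le> \<rho> - 1" for d
    using ev
  proof eventually_elim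
    case (elim s)
    note sl = lns[OF elim]
    define k where "k = \<rho>*\<epsilon>1/a"
    have k0: "k \<ge> 0" unfolding k_def using rho e1 apos by simp
    define u where "u = k * s powr (1-\<rho>) * ln s"
    have u0: "u \<ge> 0" unfolding u_def using k0 sl by simp
    have "a * u * s powr (\<rho> - 1) = a * k * ln s * (s powr (1-\<rho>) * s powr (\<rho> - 1))"
      unfolding u_def by (simp add: algebra_simps)
    also have "s powr (1-\<rho>) * s powr (\<rho> - 1) = 1" using sl by (simp add: powr_add[symmetric])
    finally have "a * u * s powr (\<rho> - 1) / \<epsilon>1 = \<rho> * ln s" unfolding k_def using apos e1 by simp
    hence ex: "exp (- (a * u * s powr (\<rho> - 1)) / \<epsilon>1) = s powr (-\<rho>)"
      using sl by (simp add: powr_def)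
    define Ps where "Ps = s powr (-d)"
    have Ps0: "Ps \<ge> 0" unfolding Ps_def by simp
    have i1: "kb / s / \<epsilon>1 \<le> kb/\<epsilon>1 * Ps * ln s"
    proof -
      have "1 / s = s powr (-1)" using sl by (simp add: powr_minus divide_inverse)
      also have "\<dots> \<le> Ps" unfolding Ps_def using d1 sl by (intro powr_mono) auto
      also have "\<dots> \<le> Ps * ln s" using Ps0 sl by (simp add: mult_le_cancel_left1)
      finally have "1 / s \<le> Ps * ln s" .
      hence "kb/\<epsilon>1 * (1/s) \<le> kb/\<epsilon>1 * (Ps * ln s)" using kb e1 by (intro mult_left_mono) auto
      thus ?thesis by (simp add: algebra_simps)
    qed
    have i2: "kb / s / \<epsilon>2 \<le> kb/\<epsilon>2 * Ps * ln s"
    proof -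
      have "1 / s = s powr (-1)" using sl by (simp add: powr_minus divide_inverse)
      also have "\<dots> \<le> Ps" unfolding Ps_def using d1 sl by (intro powr_mono) auto
      also have "\<dots> \<le> Ps * ln s" using Ps0 sl by (simp add: mult_le_cancel_left1)
      finally have "1 / s \<le> Ps * ln s" .
      hence "kb/\<epsilon>2 * (1/s) \<le> kb/\<epsilon>2 * (Ps * ln s)" using kb e2 by (intro mult_left_mono) auto
      thus ?thesis by (simp add: algebra_simps)
    qed
    have i3: "u / \<epsilon>2 \<le> k/\<epsilon>2 * Ps * ln s"
    proof -
      have "s powr (1-\<rho>) \<le> Ps" unfolding Ps_def using dr sl by (intro powr_mono) auto
      hence "k/\<epsilon>2 * s powr (1-\<rho>) * ln s \<le> k/\<epsilon>2 * Ps * ln s"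
        using k0 e2 sl by (intro mult_right_mono mult_left_mono) auto
      thus ?thesis unfolding u_def by simp
    qed
    have i4: "s powr (-\<rho>) \<le> 1 * Ps * ln s"
    proof -
      have "s powr (-\<rho>) \<le> Ps" unfolding Ps_def using dr sl by (intro powr_mono) auto
      also have "\<dots> \<le> Ps * ln s" using Ps0 sl by (simp add: mult_le_cancel_left1)
      finally show ?thesis by simp
    qed
    have "p s \<le> kb / s / \<epsilon>1 + kb / s / \<epsilon>2 + u / \<epsilon>2 + s powr (-\<rho>)"
      using UB[OF sl(2) u0] ex by simp
    also have "\<dots> \<le> kb/\<epsilon>1 * Ps * ln s + kb/\<epsilon>2 * Ps * ln s + k/\<epsilon>2 * Ps * ln s + 1 * Ps * ln s"
      using i1 i2 i3 i4 by linarith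
    also have "\<dots> = (kb/\<epsilon>1 + kb/\<epsilon>2 + k/\<epsilon>2 + 1) * Ps * ln s" by (simp add: algebra_simps)
    finally show ?case unfolding Ps_def k_def .
  qed
  have Cpos: "kb/\<epsilon>1 + kb/\<epsilon>2 + (\<rho>*\<epsilon>1/a)/\<epsilon>2 + 1 > 0"
    using kb e1 e2 apos rho by (simp add: add_pos_nonneg)
  have "Limsup at_top (\<lambda>s. ereal (- ln (p s) / ln s)) = ereal (gsdg \<rho>)"
  proof (cases "\<rho> \<le> 1")
    case True
    have g: "gsdg \<rho> = 0" using True by (simp add: gsdg_def)
    define c1 where "c1 = exp (- (2*a) / \<epsilon>1) * (1 - exp (- 1 / \<epsilon>2))"
    have c1: "c1 > 0" unfolding c1_def using e2 by simp
    show ?thesis unfolding g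
    proof (rule generic_limsup[where cl=c1 and C=1])
      show "eventually (\<lambda>s. c1 * s powr (-0) \<le> p s \<and> p s \<le> 1 * s powr (-0) * ln s) at_top"
        using ev
      proof eventually_elim
        case (elim s)
        note sl = lns[OF elim]
        have t1: "s powr (1-\<rho>) \<ge> 1" using sl True by (intro ge_one_powr_ge_zero) auto
        have "exp (- (s powr (1-\<rho>)) / \<epsilon>2) \<le> exp (- 1 / \<epsilon>2)"
          using t1 e2 by (simp add: divide_right_mono)
        hence "c1 \<le> exp (- (2*a) / \<epsilon>1) * (1 - exp (- (s powr (1-\<rho>)) / \<epsilon>2))"
          unfolding c1_def by (intro mult_left_mono) auto
        hence "c1 \<le> p s" using LB2[OF sl(2)] by linarith
        moreover have "p s \<le> ln s" using U1[of s] sl by linarith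
        ultimately show ?case using sl by simp
      qed
    qed (use c1 in auto)
  next
    case False
    hence r1: "1 < \<rho>" by simp
    show ?thesis
    proof (cases "\<rho> \<le> 2")
      case True
      have g: "gsdg \<rho> = \<rho> - 1" using True r1 by (simp add: gsdg_def)
      define c1 where "c1 = exp (- (2*a) / \<epsilon>1) / (\<epsilon>2 + 1)"
      have c1: "c1 > 0" unfolding c1_def using e2 by simp
        have low: "eventually (\<lambda>s. c1 * s powr (-(\<rho>-1)) \<le> p s) at_top"
          using ev
        proof eventually_elim
          case (elim s)
          note sl = lns[OF elim]
          define t where "t = s powr (1-\<rho>)"
          have t0: "t \<ge> 0" unfolding t_def by simp
          have t1: "t \<le> 1" unfolding t_def using sl r1 powr_mono[of "1-\<rho>" 0 s] by simp
          define y where "y = t / \<epsilon>2"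
          have y0: "y \<ge> 0" unfolding y_def using t0 e2 by simp
          have y1: "y \<le> 1 / \<epsilon>2" unfolding y_def using t1 e2 by (simp add: divide_right_mono)
          have "t / (\<epsilon>2 + 1) = y / (1 + 1/\<epsilon>2)" unfolding y_def using e2 by (simp add: field_simps)
          also have "\<dots> \<le> y / (1 + y)" using y0 y1 by (intro divide_left_mono) (auto simp: add_pos_nonneg)
          also have "\<dots> \<le> 1 - exp (- y)" using exp_h2[OF y0] .
          finally have "t / (\<epsilon>2 + 1) \<le> 1 - exp (- t / \<epsilon>2)" unfolding y_def by simp
          hence "exp (- (2*a) / \<epsilon>1) * (t / (\<epsilon>2 + 1)) \<le> exp (- (2*a) / \<epsilon>1) * (1 - exp (- t / \<epsilon>2))"
            by (intro mult_left_mono) auto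
          hence "c1 * t \<le> p s" using LB2[OF sl(2)] unfolding c1_def t_def by simp
          thus ?case unfolding t_def by (simp add: minus_diff_eq)
        qed
      show ?thesis unfolding g
        by (rule generic_limsup[where cl=c1 and C="kb/\<epsilon>1 + kb/\<epsilon>2 + (\<rho>*\<epsilon>1/a)/\<epsilon>2 + 1"])
          (use c1 r1 True Cpos in simp_all, use low upper[of "\<rho>-1"] r1 True in \<open>simp add: eventually_conj_iff\<close>)
    next
      case False
      have g: "gsdg \<rho> = 1" using False r1 by (simp add: gsdg_def)
      define c1 where "c1 = ka / (4 * \<epsilon>1)"
      have c1: "c1 > 0" unfolding c1_def using e1 ka by simp
      have ev2: "eventually (\<lambda>s::real. ka / (2 * \<epsilon>1) \<le> s) at_top" by (rule eventually_ge_at_top)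
        have low: "eventually (\<lambda>s. c1 * s powr (-1) \<le> p s) at_top"
          using ev ev2
        proof eventually_elim
          case (elim s)
          note sl = lns[OF elim(1)]
          define y where "y = ka / (2 * s) / \<epsilon>1"
          have y0: "y \<ge> 0" unfolding y_def using ka e1 sl by simp
          have y1: "y \<le> 1" unfolding y_def using elim(2) sl e1 ka by (simp add: field_simps)
          have "c1 * s powr (-1) = y / 2" unfolding y_def c1_def using sl
            by (simp add: powr_minus field_simps)
          also have "\<dots> \<le> y / (1 + y)" using y0 y1 by (intro divide_left_mono) auto
          also have "\<dots> \<le> 1 - exp (- y)" using exp_h2[OF y0] .
          also have "\<dots> \<le> p s" using LB1[OF sl(3)] unfolding y_def by simp
          finally show ?case .
        qed
      show ?thesis unfolding g
        by (rule generic_limsup[where cl=c1 and C="kb/\<epsilon>1 + kb/\<epsilon>2 + (\<rho>*\<epsilon>1/a)/\<epsilon>2 + 1"])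
          (use c1 r1 False Cpos in simp_all, use low upper[of 1] r1 False in \<open>simp add: eventually_conj_iff\<close>)
    qed
  qed
  thus ?thesis unfolding p_def .
qed

theorem theorem3:
  fixes M :: "'a measure" and X1 X2 :: "'a \<Rightarrow> real"
    and \<epsilon>1 \<epsilon>2 Rd Rs \<rho> :: real
  assumes "prob_space M"
    and "\<epsilon>1 > 0" and "\<epsilon>2 > 0"
    and "distributed M lborel X1 (exponential_density (1 / \<epsilon>1))"
    and "distributed M lborel X2 (exponential_density (1 / \<epsilon>2))"
    and "prob_space.indep_var M borel X1 borel X2"
    and "Rd > Rs" and "Rs \<ge> 0" and "\<rho> \<ge> 0"
  shows "Limsup at_top (\<lambda>snr. ereal (- ln (measure M {\<omega> \<in> space M.
            E_o_MF Rd snr (X1 \<omega>) (X2 \<omega>) \<or> E_l Rd Rs snr (snr powr \<rho>) (X1 \<omega>) (X2 \<omega>)})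
            / ln snr)) = ereal (gsdg \<rho>)
    \<and> Limsup at_top (\<lambda>snr. ereal (- ln (measure M {\<omega> \<in> space M.
            E_o_cs Rd snr (X1 \<omega>) (X2 \<omega>) \<or> E_l Rd Rs snr (snr powr \<rho>) (X1 \<omega>) (X2 \<omega>)})
            / ln snr)) = ereal (gsdg \<rho>)"
proof -
  note A = assms
  have m1[measurable]: "X1 \<in> borel_measurable M" using distributed_measurable[OF A(4)] by simp
  have m2[measurable]: "X2 \<in> borel_measurable M" using distributed_measurable[OF A(5)] by simp
  define c where "c = 2 powr (2*Rd)"
  have c1: "c > 1" unfolding c_def using A(7) A(8) gr_one_powr[of 2 "2*Rd"] by simp
  have MF: "Limsup at_top (\<lambda>snr. ereal (- ln (measure M {\<omega> \<in> space M.
            E_o_MF Rd snr (X1 \<omega>) (X2 \<omega>) \<or> E_l Rd Rs snr (snr powr \<rho>) (X1 \<omega>) (X2 \<omega>)})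
            / ln snr)) = ereal (gsdg \<rho>)"
  proof (rule core_limsup[OF A, where Q="\<lambda>s g1 g2. E_o_MF Rd s g1 g2" and ka="c - 1" and kb="2*c - 1"])
    show "c - 1 > 0" "2*c - 1 > 0" using c1 by auto
    show "E_o_MF Rd s g1 g2" if "s > 0" "g1 \<ge> 0" "g2 \<ge> 0" "g1 < (c - 1) / s" for s g1 g2
    proof -
      have "s * (g1 * g2 / (g1 + g2)) \<le> s * g1" using that hm_le[of g1 g2] by (intro mult_left_mono) auto
      also have "\<dots> < c - 1" using that by (simp add: field_simps)
      finally show ?thesis using MF_iff[OF that(1-3)] unfolding c_def by simp
    qed
    show "min g1 g2 < (2*c - 1) / s" if "s > 0" "g1 \<ge> 0" "g2 \<ge> 0" "E_o_MF Rd s g1 g2" for s g1 g2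
    proof -
      have h: "s * (g1 * g2 / (g1 + g2)) < c - 1/2" using that MF_iff[OF that(1-3)] unfolding c_def by simp
      have "s * min g1 g2 \<le> s * (2 * (g1 * g2 / (g1 + g2)))" using that hm_ge[of g1 g2]
        by (intro mult_left_mono) auto
      also have "\<dots> = 2 * (s * (g1 * g2 / (g1 + g2)))" by simp
      also have "\<dots> < 2*c - 1" using h by linarith
      finally show ?thesis using that by (simp add: field_simps)
    qed
    show "{\<omega> \<in> space M. E_o_MF Rd s (X1 \<omega>) (X2 \<omega>) \<or> E_l Rd Rs s (s powr \<rho>) (X1 \<omega>) (X2 \<omega>)} \<in> sets M" for s
      unfolding E_o_MF_def E_l_def by measurable
  qed
  have CS: "Limsup at_top (\<lambda>snr. ereal (- ln (measure M {\<omega> \<in> space M.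
            E_o_cs Rd snr (X1 \<omega>) (X2 \<omega>) \<or> E_l Rd Rs snr (snr powr \<rho>) (X1 \<omega>) (X2 \<omega>)})
            / ln snr)) = ereal (gsdg \<rho>)"
  proof (rule core_limsup[OF A, where Q="\<lambda>s g1 g2. E_o_cs Rd s g1 g2" and ka="c - 1" and kb="c - 1"])
    show "c - 1 > 0" using c1 by auto
    show "E_o_cs Rd s g1 g2" if "s > 0" "g1 \<ge> 0" "g2 \<ge> 0" "g1 < (c - 1) / s" for s g1 g2
    proof -
      have "min g1 g2 * s \<le> g1 * s" using that by (intro mult_right_mono) auto
      also have "\<dots> < c - 1" using that by (simp add: field_simps)
      finally show ?thesis using cs_iff[OF that(1-3)] unfolding c_def by simp
    qed
    show "min g1 g2 < (c - 1) / s" if "s > 0" "g1 \<ge> 0" "g2 \<ge> 0" "E_o_cs Rd s g1 g2" for s g1 g2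
      using that cs_iff[OF that(1-3)] unfolding c_def by (simp add: field_simps)
    show "{\<omega> \<in> space M. E_o_cs Rd s (X1 \<omega>) (X2 \<omega>) \<or> E_l Rd Rs s (s powr \<rho>) (X1 \<omega>) (X2 \<omega>)} \<in> sets M" for s
      unfolding E_o_cs_def E_l_def by measurable
  qed (use c1 in auto)
  show ?thesis using MF CS by simp
qed

end
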